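(* Consider the setting in the context, and let $p$ and $V(x_0,s_0,\lambda)$ be the asking reservation price and value function of $\lambda$ units of the non-traded stock. Let $\bar w=W\left(s_0e^{(\delta-\frac{\eta^2}{2})T}\eta^2T\lambda\gamma(1-\rho^2)\right)$. Then $p=D+A$, where $$D=\frac{e^{-rT}}{\gamma(1-\rho^2)}\left(\frac{\bar w}{\eta^2T}+\frac{\bar w^2}{2\eta^2T}\right),\qquad A=-\frac{e^{-rT}}{\gamma(1-\rho^2)}\ln\mathbb E\left(\exp\left(-\frac{\bar w}{\eta^2T}\left(e^{\eta\sqrt TN}-1-\eta\sqrt TN\right)\right)\right).$$ Moreover $V(x_0,s_0,\lambda)=V_D(x_0,s_0,\lambda)V_A(s_0,\lambda)$, where $$V_D(x_0,s_0,\lambda)=-\frac1\gamma\exp\left(-\gamma e^{rT}(x_0+D)-\frac{(\mu-r)^2}{2\sigma^2}T\right),\qquad V_A(s_0,\lambda)=\exp\left(-\gamma e^{rT}A\right).$$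
   Context: Fix $T>0$, $r\in\mathbb R$, $\nu,\mu\in\mathbb R$, $\eta>0$, $\sigma>0$, $\rho\in(-1,1)$, $s_0>0$, $\lambda>0$, $\gamma>0$, $x_0\in\mathbb R$; $N$ is a standard Gaussian random variable; $\delta=\nu-\eta\rho\frac{\mu-r}{\sigma}$. (Model: non-traded asset $dS_t=S_t(\nu dt+\eta dZ_t)$, traded asset $dP_t=P_t(\mu dt+\sigma dB_t)$, correlation $\rho$, bond rate $r$, exponential utility $-\frac1\gamma e^{-\gamma x}$.) The reservation price and value function are $$p=-\frac{e^{-rT}}{\gamma(1-\rho^2)}\ln\mathbb E\exp\left(-\lambda\gamma(1-\rho^2)s_0e^{(\delta-\frac{\eta^2}{2})T}e^{\eta\sqrt TN}\right),$$ $$V(x_0,s_0,\lambda)=-\frac1\gamma e^{-\gamma x_0e^{rT}-\frac{(\mu-r)^2}{2\sigma^2}T}\left(\mathbb E\exp\left(-\lambda\gamma(1-\rho^2)s_0e^{(\delta-\frac{\eta^2}{2})T}e^{\eta\sqrt TN}\right)\right)^{\frac1{1-\rho^2}}.$$ $W$ is the Lambert function, the inverse of $x\in(-1,\infty)\mapsto xe^x\in(-1/e,\infty)$. *)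

theory Defs
  imports "HOL-Probability.Probability"
begin

definition lambert_W :: "real \<Rightarrow> real" where
  "lambert_W y = (THE w. w > -1 \<and> w * exp w = y)"

definition delta_par :: "real \<Rightarrow> real \<Rightarrow> real \<Rightarrow> real \<Rightarrow> real \<Rightarrow> real \<Rightarrow> real" where
  "delta_par \<nu> \<eta> \<rho> \<mu> r \<sigma> = \<nu> - \<eta> * \<rho> * (\<mu> - r) / \<sigma>"

text \<open>The expectation appearing in the reservation price and value function;
  N is a standard Gaussian random variable on the probability space M.\<close>
definition res_expect ::
  "'w measure \<Rightarrow> ('w \<Rightarrow> real) \<Rightarrow> real \<Rightarrow> real \<Rightarrow> real \<Rightarrow> real \<Rightarrow> real \<Rightarrow> real \<Rightarrow> real \<Rightarrow> real" where
  "res_expect M N T \<delta> \<eta> \<rho> s0 lam \<gamma> =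
     (\<integral>\<omega>. exp (- lam * \<gamma> * (1 - \<rho>\<^sup>2) * s0 * exp ((\<delta> - \<eta>\<^sup>2 / 2) * T) * exp (\<eta> * sqrt T * N \<omega>)) \<partial>M)"

definition reservation_price ::
  "'w measure \<Rightarrow> ('w \<Rightarrow> real) \<Rightarrow> real \<Rightarrow> real \<Rightarrow> real \<Rightarrow> real \<Rightarrow> real \<Rightarrow> real \<Rightarrow> real \<Rightarrow> real \<Rightarrow> real" where
  "reservation_price M N T r \<delta> \<eta> \<rho> s0 lam \<gamma> =
     - exp (- r * T) / (\<gamma> * (1 - \<rho>\<^sup>2)) * ln (res_expect M N T \<delta> \<eta> \<rho> s0 lam \<gamma>)"

definition value_fn ::
  "'w measure \<Rightarrow> ('w \<Rightarrow> real) \<Rightarrow> real \<Rightarrow> real \<Rightarrow> real \<Rightarrow> real \<Rightarrow> real \<Rightarrow> real \<Rightarrow> real \<Rightarrow> real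
     \<Rightarrow> real \<Rightarrow> real \<Rightarrow> real \<Rightarrow> real" where
  "value_fn M N T r \<mu> \<sigma> \<delta> \<eta> \<rho> \<gamma> x0 s0 lam =
     - (1 / \<gamma>) * exp (- \<gamma> * x0 * exp (r * T) - (\<mu> - r)\<^sup>2 / (2 * \<sigma>\<^sup>2) * T)
       * (res_expect M N T \<delta> \<eta> \<rho> s0 lam \<gamma>) powr (1 / (1 - \<rho>\<^sup>2))"

end

theory Submission
  imports Defs
begin

lemma we_strict_mono:
  fixes u v :: real assumes "-1 < u" "u < v" shows "u * exp u < v * exp v"
proof -
  have "\<And>x. u \<le> x \<Longrightarrow> x \<le> v \<Longrightarrow> \<exists>y. DERIV (\<lambda>w. w * exp w) x :> y \<and> y > 0"
  proof -
    fix x assume "u \<le> x" "x \<le> v"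
    have "DERIV (\<lambda>w. w * exp w) x :> 1 * exp x + x * exp x"
      by (auto intro!: derivative_eq_intros)
    moreover have "1 * exp x + x * exp x > 0"
    proof -
      have "(1 + x) * exp x > 0" using \<open>u \<le> x\<close> assms by simp
      then show ?thesis by (simp add: algebra_simps)
    qed
    ultimately show "\<exists>y. DERIV (\<lambda>w. w * exp w) x :> y \<and> y > 0" by blast
  qed
  from DERIV_pos_imp_increasing[OF assms(2) this] show ?thesis by simp
qed

lemma lambert_W_spec:
  fixes y :: real assumes "y > 0"
  shows "lambert_W y > 0 \<and> lambert_W y * exp (lambert_W y) = y"
proof -
  have "\<exists>x. 0 \<le> x \<and> x \<le> y \<and> x * exp x = y"
  proof (rule IVT)
    show "0 * exp 0 \<le> y" using assms by simp
    show "y \<le> y * exp y" using assms by simp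
    show "0 \<le> y" using assms by simp
    show "\<forall>x. 0 \<le> x \<and> x \<le> y \<longrightarrow> isCont (\<lambda>x. x * exp x) x" by (auto intro!: continuous_intros)
  qed
  then obtain w where w: "0 \<le> w" "w * exp w = y" by blast
  have uniq: "v = w" if "v > -1" "v * exp v = y" for v
    using we_strict_mono[of v w] we_strict_mono[of w v] w that by (cases v w rule: linorder_cases) auto
  have "lambert_W y = w"
    unfolding lambert_W_def
    by (rule the_equality) (use w uniq in auto)
  moreover have "w > 0" using w assms by (cases "w = 0") auto
  ultimately show ?thesis using w by simp
qed


theorem theorem3:
  fixes M :: "'w measure" and N :: "'w \<Rightarrow> real"
    and T r \<nu> \<mu> \<eta> \<sigma> \<rho> s0 lam \<gamma> x0 :: real
  assumes "T > 0" "\<eta> > 0" "\<sigma> > 0" "-1 < \<rho>" "\<rho> < 1" "s0 > 0" "lam > 0" "\<gamma> > 0"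
    and "prob_space M"
    and "distributed M lborel N std_normal_density"
  shows "let \<delta> = delta_par \<nu> \<eta> \<rho> \<mu> r \<sigma>;
             wb = lambert_W (s0 * exp ((\<delta> - \<eta>\<^sup>2 / 2) * T) * \<eta>\<^sup>2 * T * lam * \<gamma> * (1 - \<rho>\<^sup>2));
             D = exp (- r * T) / (\<gamma> * (1 - \<rho>\<^sup>2)) * (wb / (\<eta>\<^sup>2 * T) + wb\<^sup>2 / (2 * \<eta>\<^sup>2 * T));
             A = - exp (- r * T) / (\<gamma> * (1 - \<rho>\<^sup>2)) *
                   ln (\<integral>\<omega>. exp (- wb / (\<eta>\<^sup>2 * T) *
                          (exp (\<eta> * sqrt T * N \<omega>) - 1 - \<eta> * sqrt T * N \<omega>)) \<partial>M);
             VD = - (1 / \<gamma>) * exp (- \<gamma> * exp (r * T) * (x0 + D) - (\<mu> - r)\<^sup>2 / (2 * \<sigma>\<^sup>2) * T);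
             VA = exp (- \<gamma> * exp (r * T) * A)
         in reservation_price M N T r \<delta> \<eta> \<rho> s0 lam \<gamma> = D + A
            \<and> value_fn M N T r \<mu> \<sigma> \<delta> \<eta> \<rho> \<gamma> x0 s0 lam = VD * VA"
proof -
  note distr = assms(10)
  interpret P: prob_space M by (rule assms(9))
  have Nmeas[measurable]: "N \<in> borel_measurable M"
    using distributed_measurable[OF distr] by simp
  define \<delta> where "\<delta> = delta_par \<nu> \<eta> \<rho> \<mu> r \<sigma>"
  define a where "a = \<eta> * sqrt T"
  define a2 where "a2 = \<eta>\<^sup>2 * T"
  define k where "k = 1 - \<rho>\<^sup>2"
  define c where "c = lam * \<gamma> * k * s0 * exp ((\<delta> - \<eta>\<^sup>2 / 2) * T)"
  define y where "y = s0 * exp ((\<delta> - \<eta>\<^sup>2 / 2) * T) * \<eta>\<^sup>2 * T * lam * \<gamma> * (1 - \<rho>\<^sup>2)"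
  define b where "b = lambert_W y"
  have kpos: "k > 0" unfolding k_def using assms(4,5)
    by (smt (verit) abs_less_iff abs_square_less_1)
  have a2pos: "a2 > 0" unfolding a2_def using assms by simp
  have apos: "a > 0" unfolding a_def using assms by simp
  have aa: "a * a = a2" unfolding a_def a2_def using assms by (simp add: power2_eq_square algebra_simps)
  have cpos: "c > 0" unfolding c_def using assms kpos by simp
  have yc: "y = c * a2" unfolding y_def c_def a2_def k_def by (simp add: algebra_simps)
  have ypos: "y > 0" using yc cpos a2pos by simp
  have bpos: "b > 0" and bexp: "b * exp b = y" using lambert_W_spec[OF ypos] unfolding b_def by auto
  define t0 where "t0 = b / a"
  have at0: "a * t0 = b" unfolding t0_def using apos by simp
  have cexp: "c * exp (- b) = b / a2"
    using bexp yc a2pos by (simp add: exp_minus field_simps)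
  define g1 where "g1 = (\<lambda>x. exp (- lam * \<gamma> * (1 - \<rho>\<^sup>2) * s0 * exp ((\<delta> - \<eta>\<^sup>2 / 2) * T) * exp (\<eta> * sqrt T * x)))"
  define g2 where "g2 = (\<lambda>x. exp (- b / (\<eta>\<^sup>2 * T) * (exp (\<eta> * sqrt T * x) - 1 - \<eta> * sqrt T * x)))"
  define K where "K = exp (- (b / (\<eta>\<^sup>2 * T) + b\<^sup>2 / (2 * \<eta>\<^sup>2 * T)))"
  define E2 where "E2 = (\<integral>\<omega>. g2 (N \<omega>) \<partial>M)"
  have g1a: "g1 z = exp (- (c * exp (a * z)))" for z
    unfolding g1_def c_def a_def k_def by simp
  have g2a: "g2 z = exp (- (b / a2) * (exp (a * z) - 1 - a * z))" for z
    unfolding g2_def a_def a2_def by simp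
  have Ka: "K = exp (- (b / a2 + b\<^sup>2 / (2 * a2)))" unfolding K_def a2_def by simp
  have pw: "std_normal_density (- t0 + x) * g1 (- t0 + x) = K * (std_normal_density x * g2 x)" for x
  proof -
    have e1: "exp (a * (- t0 + x)) = exp (- b) * exp (a * x)"
      using at0 by (simp add: algebra_simps flip: exp_add)
    have CT: "c * exp (a * (- t0 + x)) = b / a2 * exp (a * x)"
      using e1 cexp by (metis mult.assoc)
    have "std_normal_density (- t0 + x) * g1 (- t0 + x)
        = 1 / sqrt (2 * pi) * (exp (- (- t0 + x)\<^sup>2 / 2) * exp (- (b / a2 * exp (a * x))))"
      unfolding std_normal_density_def g1a CT by simp
    then have L: "std_normal_density (- t0 + x) * g1 (- t0 + x)
        = 1 / sqrt (2 * pi) * exp (- (- t0 + x)\<^sup>2 / 2 - b / a2 * exp (a * x))"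
      by (simp only: diff_conv_add_uminus exp_add)
    have R: "K * (std_normal_density x * g2 x)
        = 1 / sqrt (2 * pi) * exp (- (b / a2 + b\<^sup>2 / (2 * a2)) + (- x\<^sup>2 / 2) + (- (b / a2) * (exp (a * x) - 1 - a * x)))"
      unfolding std_normal_density_def g2a Ka by (simp only: exp_add mult_ac)
    have t0sq: "t0 * t0 = b * b / a2" unfolding t0_def using aa[symmetric] by simp
    have t0x: "t0 * x = b / a2 * (a * x)" unfolding t0_def using aa[symmetric] apos by (simp add: field_simps)
    have "- (- t0 + x)\<^sup>2 / 2 - b / a2 * exp (a * x)
        = - (b / a2 + b\<^sup>2 / (2 * a2)) + (- x\<^sup>2 / 2) + (- (b / a2) * (exp (a * x) - 1 - a * x))"
    proof -
      have "- (- t0 + x)\<^sup>2 / 2 = - x\<^sup>2 / 2 + t0 * x - t0 * t0 / 2"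
        by (simp add: power2_eq_square field_simps)
      also have "\<dots> = - x\<^sup>2 / 2 + b / a2 * (a * x) - b * b / a2 / 2" using t0sq t0x by simp
      finally have X: "- (- t0 + x)\<^sup>2 / 2 = - x\<^sup>2 / 2 + b / a2 * (a * x) - b * b / a2 / 2" .
      show ?thesis unfolding X using a2pos by (simp add: power2_eq_square field_simps)
    qed
    then show ?thesis using L R by simp
  qed
  have key: "res_expect M N T \<delta> \<eta> \<rho> s0 lam \<gamma> = K * E2"
  proof -
    have "res_expect M N T \<delta> \<eta> \<rho> s0 lam \<gamma> = (\<integral>\<omega>. g1 (N \<omega>) \<partial>M)"
      unfolding res_expect_def g1_def by simp
    also have "\<dots> = (\<integral>x. std_normal_density x * g1 x \<partial>lborel)"
      by (rule distributed_integral[OF distr, symmetric]) (auto simp: g1_def)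
    also have "\<dots> = (\<integral>x. std_normal_density (- t0 + 1 * x) * g1 (- t0 + 1 * x) \<partial>lborel)"
      using lborel_integral_real_affine[of 1 "\<lambda>x. std_normal_density x * g1 x" "- t0"] by simp
    also have "\<dots> = (\<integral>x. K * (std_normal_density x * g2 x) \<partial>lborel)"
      using pw by simp
    also have "\<dots> = K * (\<integral>x. std_normal_density x * g2 x \<partial>lborel)"
      by simp
    also have "(\<integral>x. std_normal_density x * g2 x \<partial>lborel) = E2"
      unfolding E2_def
      by (rule distributed_integral[OF distr]) (auto simp: g2_def)
    finally show ?thesis .
  qed
  have g2pos: "0 < g2 z" for z unfolding g2_def by simp
  have g2le: "g2 z \<le> 1" for z
  proof -
    have "1 + a * z \<le> exp (a * z)" by (rule exp_ge_add_one_self)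
    then have "0 \<le> exp (a * z) - 1 - a * z" by linarith
    then have "0 \<le> b / a2 * (exp (a * z) - 1 - a * z)" using bpos a2pos by (intro mult_nonneg_nonneg) auto
    then show ?thesis unfolding g2a by simp
  qed
  have E2pos: "E2 > 0"
  proof -
    have int: "integrable M (\<lambda>\<omega>. g2 (N \<omega>))"
    proof (rule P.integrable_const_bound[where B=1])
      show "AE \<omega> in M. norm (g2 (N \<omega>)) \<le> 1"
        using g2le g2pos by (intro AE_I2) (simp add: abs_of_pos)
      show "(\<lambda>\<omega>. g2 (N \<omega>)) \<in> borel_measurable M" unfolding g2_def by simp
    qed
    have nn: "0 \<le> E2" unfolding E2_def by (rule integral_nonneg_AE, rule AE_I2) (simp add: less_imp_le g2pos)
    moreover have "E2 \<noteq> 0"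
    proof
      assume "E2 = 0"
      moreover have nnAE: "AE \<omega> in M. 0 \<le> g2 (N \<omega>)" by (rule AE_I2) (simp add: less_imp_le g2pos)
      ultimately have "AE \<omega> in M. g2 (N \<omega>) = 0"
        using integral_nonneg_eq_0_iff_AE[OF int nnAE] unfolding E2_def by blast
      then have "AE \<omega> in M. False" by eventually_elim (metis g2pos less_irrefl)
      then show False using P.AE_False by simp
    qed
    ultimately show ?thesis by simp
  qed
  define R where "R = res_expect M N T \<delta> \<eta> \<rho> s0 lam \<gamma>"
  have Rpos: "R > 0" unfolding R_def key K_def using E2pos by simp
  have lnR: "ln R = - (b / (\<eta>\<^sup>2 * T) + b\<^sup>2 / (2 * \<eta>\<^sup>2 * T)) + ln E2"
    unfolding R_def key K_def using E2pos by (simp add: ln_mult)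
  define D where "D = exp (- r * T) / (\<gamma> * (1 - \<rho>\<^sup>2)) * (b / (\<eta>\<^sup>2 * T) + b\<^sup>2 / (2 * \<eta>\<^sup>2 * T))"
  define A where "A = - exp (- r * T) / (\<gamma> * (1 - \<rho>\<^sup>2)) * ln E2"
  have p: "reservation_price M N T r \<delta> \<eta> \<rho> s0 lam \<gamma> = D + A"
    unfolding reservation_price_def R_def[symmetric] lnR D_def A_def by (simp add: algebra_simps)
  have DA: "\<gamma> * exp (r * T) * (D + A) = - ln R / k"
  proof -
    have "D + A = - exp (- r * T) / (\<gamma> * k) * ln R"
      unfolding D_def A_def lnR k_def by (simp add: algebra_simps)
    then show ?thesis using assms kpos by (simp add: field_simps exp_minus)
  qed
  have v: "value_fn M N T r \<mu> \<sigma> \<delta> \<eta> \<rho> \<gamma> x0 s0 lam =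
      - (1 / \<gamma>) * exp (- \<gamma> * exp (r * T) * (x0 + D) - (\<mu> - r)\<^sup>2 / (2 * \<sigma>\<^sup>2) * T) *
      exp (- \<gamma> * exp (r * T) * A)"
  proof -
    have "R powr (1 / (1 - \<rho>\<^sup>2)) = exp (ln R / k)"
      using Rpos unfolding powr_def k_def by simp
    moreover have "exp (- \<gamma> * exp (r * T) * (x0 + D) - (\<mu> - r)\<^sup>2 / (2 * \<sigma>\<^sup>2) * T) *
      exp (- \<gamma> * exp (r * T) * A) = exp (- \<gamma> * x0 * exp (r * T) - (\<mu> - r)\<^sup>2 / (2 * \<sigma>\<^sup>2) * T) * exp (ln R / k)"
    proof -
      have "(- \<gamma> * exp (r * T) * (x0 + D) - (\<mu> - r)\<^sup>2 / (2 * \<sigma>\<^sup>2) * T) + (- \<gamma> * exp (r * T) * A)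
         = (- \<gamma> * x0 * exp (r * T) - (\<mu> - r)\<^sup>2 / (2 * \<sigma>\<^sup>2) * T) + ln R / k"
        using DA by (simp add: algebra_simps)
      then show ?thesis by (simp flip: exp_add)
    qed
    ultimately show ?thesis unfolding value_fn_def R_def[symmetric] by simp
  qed
  show ?thesis
    unfolding Let_def \<delta>_def[symmetric] y_def[symmetric] b_def[symmetric] g2_def[symmetric]
    using p v unfolding D_def A_def E2_def g2_def by simp
qed

end
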